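(* Let $p\ge5$ be a prime. Let $F_0=0$, $F_1=1$, $F_n=F_{n-1}+F_{n-2}$ ($n\ge2$) be the Fibonacci numbers and $L_0=2$, $L_1=1$, $L_n=L_{n-1}+L_{n-2}$ ($n\ge2$) the Lucas numbers. Let $n$ be the least positive integer such that $p\mid F_n$. Then $$\sum_{j=1}^{n-1}\frac{L_j}{F_j}\equiv\frac{5(n^2-1)}{6}\cdot\frac{F_n}{L_n}\pmod{p^2}.$$
   Context: A congruence between rational numbers modulo $p^2$ means that the difference, written as a fraction whose denominator is coprime to $p$, has numerator divisible by $p^2$. *)

theory Defs
  imports "HOL-Number_Theory.Number_Theory"
begin

fun lucas :: "nat \<Rightarrow> nat" where
  "lucas 0 = 2"
| "lucas (Suc 0) = 1"
| "lucas (Suc (Suc n)) = lucas (Suc n) + lucas n"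

definition rat_cong_mod :: "rat \<Rightarrow> rat \<Rightarrow> int \<Rightarrow> int \<Rightarrow> bool" where
  "rat_cong_mod x y p m \<longleftrightarrow>
     (\<exists>a b. b \<noteq> 0 \<and> coprime b p \<and> m dvd a \<and> x - y = of_int a / of_int b)"

end

theory Submission
  imports Defs
begin


datatype zphi = ZP int int

primrec re :: "zphi \<Rightarrow> int" where "re (ZP a b) = a"
primrec im :: "zphi \<Rightarrow> int" where "im (ZP a b) = b"

lemma zphi_eq_iff: "x = y \<longleftrightarrow> re x = re y \<and> im x = im y"
  by (cases x; cases y) auto

instantiation zphi :: comm_ring_1
begin
definition "0 = ZP 0 0"
definition "1 = ZP 1 0"
definition "x + y = ZP (re x + re y) (im x + im y)"
definition "x - y = ZP (re x - re y) (im x - im y)"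
definition "- x = ZP (- re x) (- im x)"
definition "x * y = ZP (re x * re y + im x * im y) (re x * im y + im x * re y + im x * im y)"
instance
  by standard (auto simp: zphi_eq_iff zero_zphi_def one_zphi_def plus_zphi_def minus_zphi_def
      uminus_zphi_def times_zphi_def algebra_simps)
end

lemma re_simps[simp]: "re 0 = 0" "re 1 = 1" "re (x+y) = re x + re y" "re (x - y) = re x - re y"
  "re (-x) = - re x" "re (x*y) = re x * re y + im x * im y"
  by (simp_all add: zero_zphi_def one_zphi_def plus_zphi_def minus_zphi_def
      uminus_zphi_def times_zphi_def)
lemma im_simps[simp]: "im 0 = 0" "im 1 = 0" "im (x+y) = im x + im y" "im (x - y) = im x - im y"
  "im (-x) = - im x" "im (x*y) = re x * im y + im x * re y + im x * im y"
  by (simp_all add: zero_zphi_def one_zphi_def plus_zphi_def minus_zphi_def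
      uminus_zphi_def times_zphi_def)

lemma re_of_nat[simp]: "re (of_nat k) = int k" and im_of_nat[simp]: "im (of_nat k) = 0"
  by (induction k) auto
lemma re_of_int[simp]: "re (of_int k) = k" and im_of_int[simp]: "im (of_int k) = 0"
  by (cases k rule: int_cases; simp)+

lemma re_numeral[simp]: "re (numeral k) = numeral k" and im_numeral[simp]: "im (numeral k) = 0"
  using re_of_nat[of "numeral k"] im_of_nat[of "numeral k"] by simp_all

lemma of_int_zphi_inj: "(of_int a :: zphi) = of_int b \<longleftrightarrow> a = b"
  by (simp add: zphi_eq_iff)

lemma of_int_dvd_zphi: "(of_int p :: zphi) dvd z \<longleftrightarrow> p dvd re z \<and> p dvd im z"
proof
  assume "of_int p dvd z" then obtain c where "z = of_int p * c" by blast
  then show "p dvd re z \<and> p dvd im z" by simp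
next
  assume "p dvd re z \<and> p dvd im z"
  then obtain a b where "re z = p*a" "im z = p*b" by blast
  then have "z = of_int p * ZP a b" by (simp add: zphi_eq_iff)
  then show "of_int p dvd z" by simp
qed

lemma of_int_dvd_of_int_zphi: "(of_int p :: zphi) dvd of_int a \<longleftrightarrow> p dvd a"
  by (simp add: of_int_dvd_zphi)

definition al :: zphi where "al = ZP 0 1"
definition be :: zphi where "be = 1 - al"
definition sq :: zphi where "sq = al - be"

lemma al_sq: "al^2 = al + 1" by (simp add: power2_eq_square al_def zphi_eq_iff)
lemma al_be: "al * be = -1" by (simp add: be_def al_def zphi_eq_iff)
lemma sq_sq: "sq * sq = 5" by (simp add: sq_def be_def al_def zphi_eq_iff numeral_eq_Suc)
  
lemma binet_fib: "sq * of_nat (fib k) = al^k - be^k"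
proof (induction k rule: fib.induct)
  case 1 then show ?case by simp
next
  case 2 then show ?case by (simp add: sq_def)
next
  case (3 k)
  have "al^Suc (Suc k) = al^Suc k + al^k" "be^Suc (Suc k) = be^Suc k + be^k"
    by (simp_all add: al_def be_def zphi_eq_iff algebra_simps)
  then show ?case using 3 by (simp add: algebra_simps)
qed

lemma binet_lucas: "of_nat (lucas k) = al^k + be^k"
proof (induction k rule: lucas.induct)
  case 1 then show ?case by simp
next
  case 2 then show ?case by (simp add: be_def)
next
  case (3 k)
  have "al^Suc (Suc k) = al^Suc k + al^k" "be^Suc (Suc k) = be^Suc k + be^k"
    by (simp_all add: al_def be_def zphi_eq_iff algebra_simps)
  then show ?case using 3 by (simp add: algebra_simps)
qed

lemma cancel5: "(5::zphi) * x = 5 * y \<Longrightarrow> x = y"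
  by (simp add: zphi_eq_iff)



lemma dvd_pow_sub:
  fixes a b m :: "'a::comm_ring_1"
  assumes "m dvd (a - b)" shows "m dvd (a^k - b^k)"
proof (induction k)
  case 0 then show ?case by simp
next
  case (Suc k)
  have "a^Suc k - b^Suc k = a*(a^k - b^k) + b^k*(a-b)" by (simp add: algebra_simps)
  then show ?case using Suc assms by (simp add: dvd_add dvd_mult)
qed

lemma wsum:
  fixes w :: "'a::comm_ring_1"
  shows "(w - 1) * (\<Sum>k<n. of_nat k * w^k) + w * (\<Sum>k<n. w^k) = of_nat n * w^n"
  by (induction n) (simp_all add: algebra_simps)

lemma geo0:
  fixes w u m :: "'a::comm_ring_1"
  assumes "m dvd (w^n - 1)" "m dvd (u*(w-1) - 1)"
  shows "m dvd (\<Sum>k<n. w^k)"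
proof -
  have "(\<Sum>k<n. w^k) = u*(w^n-1) - (u*(w-1) - 1)*(\<Sum>k<n. w^k)"
    by (simp add: power_diff_1_eq algebra_simps)
  then show ?thesis using assms by (metis dvd_diff dvd_mult dvd_mult2)
qed

lemma nu:
  fixes w u m :: "'a::comm_ring_1"
  assumes "m dvd (w^n - 1)" "m dvd (u*(w-1) - 1)"
  shows "m dvd (of_nat n * u - (\<Sum>k<n. of_nat k * w^k))"
proof -
  define A where "A = (\<Sum>k<n. w^k)"
  define B where "B = (\<Sum>k<n. of_nat k * w^k)"
  have W: "(w-1)*B + w*A = of_nat n * w^n" using wsum unfolding A_def B_def by blast
  have "of_nat n * u - B = - (of_nat n * u) * (w^n - 1) + u*w*A + (u*(w-1)-1)*B
      - u * ((w-1)*B + w*A - of_nat n * w^n)"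
    by (simp add: algebra_simps)
  also have "\<dots> = - (of_nat n * u) * (w^n - 1) + u*w*A + (u*(w-1)-1)*B" using W by simp
  finally have E: "of_nat n * u - B = - (of_nat n * u) * (w^n - 1) + u*w*A + (u*(w-1)-1)*B" .
  have "m dvd A" using geo0[OF assms] unfolding A_def .
  then show ?thesis unfolding B_def[symmetric] E using assms
    by (intro dvd_add dvd_mult dvd_mult2) auto
qed

lemma sum_k2: "2 * (\<Sum>k<n. k) = n * (n - 1::nat)"
proof (induction n)
  case 0 then show ?case by simp
next
  case (Suc n)
  then show ?case by (cases n) (auto simp: algebra_simps)
qed

lemma sum_k3: "6 * (\<Sum>k<n. k*k) = n * (n - 1) * (2*n - 1::nat)"
proof (induction n)
  case 0 then show ?case by simp
next
  case (Suc n)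
  then show ?case by (cases n) (auto simp: algebra_simps)
qed

lemma arith_id: "12 * (int n * (\<Sum>k<n. int (k*k)) - (\<Sum>k<n. int k)^2) = int n^2 * (int n^2 - 1)"
proof -
  have a: "2 * (\<Sum>k<n. int k) = int n * (int n - 1)"
    using arg_cong[OF sum_k2[of n], of int] by (cases n) (auto simp: of_nat_sum algebra_simps)
  have b: "6 * (\<Sum>k<n. int (k*k)) = int n * (int n - 1) * (2 * int n - 1)"
    using arg_cong[OF sum_k3[of n], of int] by (cases n) (auto simp: of_nat_sum algebra_simps)
  have "12 * (int n * (\<Sum>k<n. int (k*k)) - (\<Sum>k<n. int k)^2)
     = 2 * int n * (6 * (\<Sum>k<n. int (k*k))) - 3 * (2 * (\<Sum>k<n. int k))^2"
    by (simp add: algebra_simps power2_eq_square)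
  also have "\<dots> = int n^2 * (int n^2 - 1)" unfolding a b by (simp add: algebra_simps power2_eq_square)
  finally show ?thesis .
qed



lemma lessThan_Suc_split0: "{..<Suc m} = insert 0 {1..m}"
  by (auto simp: atLeast1_atMost_eq_remove0 lessThan_Suc_atMost)

lemma sum_lessThan_split1:
  assumes "(n::nat) > 0" shows "(\<Sum>j<n. f j) = f 0 + (\<Sum>j=1..n-1. f j)"
proof -
  obtain m where "n = Suc m" using assms gr0_implies_Suc by blast
  then have "{..<n} = insert 0 {1..n-1}" using lessThan_Suc_split0 by simp
  then show ?thesis by simp
qed

lemma main_generic:
  fixes x y m :: "'a::comm_ring_1" and n :: nat and u v :: "nat \<Rightarrow> 'a"
  assumes n: "n > 0" and xy: "x*y = 1" and xn: "m dvd (x^n - 1)"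
    and unit: "\<And>d. 0<d \<Longrightarrow> d<n \<Longrightarrow> \<exists>a. m dvd (a*(x^d-1) - 1)"
    and uu: "\<And>j. 0<j \<Longrightarrow> j<n \<Longrightarrow> m dvd (u j * (x^j - 1) - 1)"
    and vv: "\<And>j. 0<j \<Longrightarrow> j<n \<Longrightarrow> m dvd (v j * (y^j - 1) - 1)"
  shows "m dvd (12 * of_nat n^2 * (\<Sum>j=1..n-1. u j * v j) - of_int (int n^2 * (int n^2 - 1)))"
proof -
  have "y^n - 1 = -(y^n)*(x^n-1)"
    using xy by (simp add: algebra_simps power_mult_distrib[symmetric])
  then have yn: "m dvd (y^n - 1)" using xn by simp
  have xjn: "m dvd ((x^j)^n - 1)" for j
    using dvd_pow_sub[OF xn, of j] by (simp add: power_mult[symmetric] mult.commute)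
  have yjn: "m dvd ((y^j)^n - 1)" for j
    using dvd_pow_sub[OF yn, of j] by (simp add: power_mult[symmetric] mult.commute)
  define B where "B j = (\<Sum>k<n. of_nat k * (x^j)^k)" for j
  define C where "C j = (\<Sum>k<n. of_nat k * (y^j)^k)" for j
  define G where "G k l = (\<Sum>j=1..n-1. (x^k*y^l)^j)" for k l
  have prod: "m dvd (of_nat n^2 * (u j * v j) - B j * C j)" if j: "j \<in> {1..n-1}" for j
  proof -
    have j': "0 < j" "j < n" using j n by auto
    have 1: "m dvd (of_nat n * u j - B j)" unfolding B_def by (rule nu[OF xjn uu[OF j']])
    have 2: "m dvd (of_nat n * v j - C j)" unfolding C_def by (rule nu[OF yjn vv[OF j']])
    have "of_nat n^2 * (u j * v j) - B j * C j
       = (of_nat n * u j - B j) * (of_nat n * v j) + B j * (of_nat n * v j - C j)"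
      by (simp add: algebra_simps power2_eq_square)
    then show ?thesis using 1 2 by simp
  qed
  have S1: "m dvd (of_nat n^2 * (\<Sum>j=1..n-1. u j * v j) - (\<Sum>j=1..n-1. B j * C j))"
    using dvd_sum[of "{1..n-1}" m "\<lambda>j. of_nat n^2 * (u j * v j) - B j * C j"] prod
    by (simp add: sum_subtractf sum_distrib_left)
  have BC: "B j * C j = (\<Sum>k<n. \<Sum>l<n. of_nat (k*l) * (x^k*y^l)^j)" for j
    unfolding B_def C_def sum_product
    by (intro sum.cong refl) (simp add: power_mult_distrib power_mult[symmetric] mult.commute mult.left_commute)
  have swap: "(\<Sum>j=1..n-1. B j * C j) = (\<Sum>k<n. \<Sum>l<n. of_nat (k*l) * G k l)"
  proof -
    have "(\<Sum>j=1..n-1. B j * C j) = (\<Sum>j=1..n-1. \<Sum>k<n. \<Sum>l<n. of_nat (k*l) * (x^k*y^l)^j)"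
      unfolding BC ..
    also have "\<dots> = (\<Sum>k<n. \<Sum>j=1..n-1. \<Sum>l<n. of_nat (k*l) * (x^k*y^l)^j)"
      by (rule sum.swap)
    also have "\<dots> = (\<Sum>k<n. \<Sum>l<n. \<Sum>j=1..n-1. of_nat (k*l) * (x^k*y^l)^j)"
      by (rule sum.cong[OF refl], rule sum.swap)
    also have "\<dots> = (\<Sum>k<n. \<Sum>l<n. of_nat (k*l) * G k l)"
      unfolding G_def sum_distrib_left ..
    finally show ?thesis .
  qed
  have Gk: "m dvd (G k l - (if k = l then of_nat n - 1 else -1))" if "k < n" "l < n" for k l
  proof -
    have Gs: "G k l = (\<Sum>j<n. (x^k*y^l)^j) - 1"
      unfolding G_def using sum_lessThan_split1[OF n, of "\<lambda>j. (x^k*y^l)^j"] by simp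
    show ?thesis
    proof (cases "k = l")
      case True
      then have "x^k*y^l = 1" using xy by (simp add: power_mult_distrib[symmetric])
      then show ?thesis using True Gs by simp
    next
      case False
      show ?thesis
      proof (cases "l < k")
        case True
        define d where "d = k - l"
        have kk: "k = d + l" using True unfolding d_def by simp
        have "x^k*y^l = x^d*((x*y)^l)" by (simp add: kk power_add power_mult_distrib mult.assoc)
        then have z: "x^k*y^l = x^d" using xy by simp
        have d: "0 < d" "d < n" using True that unfolding d_def by auto
        obtain a where a: "m dvd (a*(x^d-1) - 1)" using unit[OF d] by blast
        have "m dvd (\<Sum>j<n. (x^d)^j)" by (rule geo0[OF xjn a])
        then show ?thesis using False Gs z by simp
      next
        case False': False
        define d where "d = l - k"
        have lk: "k < l" using False False' by simp
        have ll: "l = d + k" using lk unfolding d_def by simp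
        have "x^k*y^l = y^d*((x*y)^k)" by (simp add: ll power_add power_mult_distrib mult.assoc mult.commute mult.left_commute)
        then have z: "x^k*y^l = y^d" using xy by simp
        have d: "0 < d" "d < n" using lk that unfolding d_def by auto
        obtain a where a: "m dvd (a*(x^d-1) - 1)" using unit[OF d] by blast
        have "(-(a*x^d))*(y^d - 1) = a*(x^d - 1)"
          using xy by (simp add: algebra_simps power_mult_distrib[symmetric])
        then have a': "m dvd ((-(a*x^d))*(y^d-1) - 1)" using a by simp
        have "m dvd (\<Sum>j<n. (y^d)^j)" by (rule geo0[OF yjn a'])
        then show ?thesis using False Gs z by simp
      qed
    qed
  qed
  define H where "H k l = (if (k::nat) = l then of_nat n - 1 else (-1::'a))" for k l
  have S2: "m dvd ((\<Sum>k<n. \<Sum>l<n. of_nat (k*l) * G k l) - (\<Sum>k<n. \<Sum>l<n. of_nat (k*l) * H k l))"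
  proof -
    have "(\<Sum>k<n. \<Sum>l<n. of_nat (k*l) * G k l) - (\<Sum>k<n. \<Sum>l<n. of_nat (k*l) * H k l)
       = (\<Sum>k<n. \<Sum>l<n. of_nat (k*l) * (G k l - H k l))"
      by (simp add: sum_subtractf algebra_simps)
    also have "m dvd \<dots>" using Gk unfolding H_def by (intro dvd_sum dvd_mult) auto
    finally show ?thesis .
  qed
  have E: "(\<Sum>k<n. \<Sum>l<n. of_nat (k*l) * H k l) =
      of_nat n * (\<Sum>k<n. of_nat (k*k)) - (\<Sum>k<n. of_nat k)^2"
  proof -
    have "of_nat (k*l) * H k l = of_nat (k*l) * (if k = l then of_nat n else 0) - of_nat k * of_nat l" for k l
      unfolding H_def by (simp add: algebra_simps)
    then have "(\<Sum>k<n. \<Sum>l<n. of_nat (k*l) * H k l) =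
       (\<Sum>k<n. \<Sum>l<n. of_nat (k*l) * (if k = l then of_nat n else 0)) - (\<Sum>k<n. \<Sum>l<n. of_nat k * of_nat l)"
      by (simp only: sum_subtractf)
    also have "(\<Sum>k<n. \<Sum>l<n. of_nat (k*l) * (if k = l then of_nat n else 0)) = (\<Sum>k<n. of_nat (k*k) * (of_nat n::'a))"
    proof -
      have "of_nat (k*l) * (if k = l then of_nat n else 0) = (if k = l then of_nat(k*k)*(of_nat n::'a) else 0)" for k l
        by simp
      then show ?thesis by simp
    qed
    also have "(\<Sum>k<n. \<Sum>l<n. of_nat k * of_nat l) = (\<Sum>k<n. (of_nat k::'a))^2"
      by (simp add: power2_eq_square sum_product)
    finally show ?thesis by (simp add: sum_distrib_left mult.commute)
  qed
  have A: "12 * (of_nat n * (\<Sum>k<n. of_nat (k*k)) - (\<Sum>k<n. of_nat k)^2) = (of_int (int n^2 * (int n^2 - 1)) :: 'a)"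
    using arg_cong[OF arith_id[of n], of "of_int :: int \<Rightarrow> 'a"] by (simp add: of_int_sum)
  have eqn: "(of_int (int n^2 * (int n^2 - 1)) :: 'a) = 12 * (\<Sum>k<n. \<Sum>l<n. of_nat (k*l) * H k l)"
    using A E by simp
  have "12 * of_nat n^2 * (\<Sum>j=1..n-1. u j * v j) - of_int (int n^2 * (int n^2 - 1))
     = 12 * (of_nat n^2 * (\<Sum>j=1..n-1. u j * v j) - (\<Sum>j=1..n-1. B j * C j))
       + 12 * ((\<Sum>j=1..n-1. B j * C j) - (\<Sum>k<n. \<Sum>l<n. of_nat (k*l) * H k l))"
    unfolding eqn by (simp add: algebra_simps)
  also have "\<dots> = 12 * (of_nat n^2 * (\<Sum>j=1..n-1. u j * v j) - (\<Sum>j=1..n-1. B j * C j))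
       + 12 * ((\<Sum>k<n. \<Sum>l<n. of_nat (k*l) * G k l) - (\<Sum>k<n. \<Sum>l<n. of_nat (k*l) * H k l))"
    unfolding swap ..
  finally have eq: "12 * of_nat n^2 * (\<Sum>j=1..n-1. u j * v j) - of_int (int n^2 * (int n^2 - 1))
     = 12 * (of_nat n^2 * (\<Sum>j=1..n-1. u j * v j) - (\<Sum>j=1..n-1. B j * C j))
       + 12 * ((\<Sum>k<n. \<Sum>l<n. of_nat (k*l) * G k l) - (\<Sum>k<n. \<Sum>l<n. of_nat (k*l) * H k l))" .
  show ?thesis unfolding eq by (rule dvd_add; rule dvd_mult; fact)
qed



lemma of_nat_dvd_gen: "p dvd c \<Longrightarrow> (of_nat p :: 'a::comm_ring_1) dvd of_nat c"
  by (metis dvd_def of_nat_mult)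

lemma fresh:
  fixes a b :: "'a::comm_ring_1"
  assumes p: "prime p"
  shows "of_nat p dvd ((a+b)^p - a^p - b^p)"
proof -
  have p2: "p \<ge> 2" using p prime_ge_2_nat by blast
  have set: "{..p} = insert 0 (insert p {1..p-1})" using p2 by auto
  have "(a+b)^p = (\<Sum>k\<le>p. of_nat (p choose k) * a^k * b^(p-k))"
    by (rule binomial_ring)
  also have "\<dots> = b^p + (a^p + (\<Sum>k\<in>{1..p-1}. of_nat (p choose k) * a^k * b^(p-k)))"
    unfolding set using p2 by (subst sum.insert; simp)+
  finally have eq: "(a+b)^p - a^p - b^p = (\<Sum>k\<in>{1..p-1}. of_nat (p choose k) * a^k * b^(p-k))"
    by simp
  have "of_nat p dvd (\<Sum>k\<in>{1..p-1}. of_nat (p choose k) * a^k * b^(p-k))"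
  proof (rule dvd_sum)
    fix k assume "k \<in> {1..p-1}"
    then have "p dvd (p choose k)" using p p2 by (intro dvd_choose_prime) auto
    then show "of_nat p dvd of_nat (p choose k) * a^k * b^(p-k)"
      by (intro dvd_mult2 of_nat_dvd_gen)
  qed
  then show ?thesis using eq by simp
qed

lemma of_nat_zphi_inj: "(of_nat a :: zphi) = of_nat b \<longleftrightarrow> a = b"
  by (simp add: zphi_eq_iff)

lemma albe_pow: "al^j * be^j = (-1)^j"
  by (metis al_be power_mult_distrib)

lemma I1: "lucas j * fib k + lucas k * fib j = 2 * fib (j+k)"
proof -
  have "sq * of_nat (lucas j * fib k + lucas k * fib j)
      = of_nat (lucas j) * (sq * of_nat (fib k)) + of_nat (lucas k) * (sq * of_nat (fib j))"
    by (simp add: algebra_simps)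
  also have "\<dots> = (al^j+be^j)*(al^k-be^k) + (al^k+be^k)*(al^j-be^j)"
    by (simp only: binet_fib binet_lucas)
  also have "\<dots> = 2 * (al^(j+k) - be^(j+k))" by (simp add: algebra_simps power_add)
  also have "\<dots> = 2 * (sq * of_nat (fib (j+k)))" by (simp only: binet_fib)
  also have "\<dots> = sq * of_nat (2 * fib (j+k))" by simp
  finally have "sq * (sq * of_nat (lucas j * fib k + lucas k * fib j)) = sq * (sq * of_nat (2 * fib (j+k)))"
    by simp
  then have "5 * (of_nat (lucas j * fib k + lucas k * fib j) :: zphi) = 5 * of_nat (2 * fib (j+k))"
    by (simp add: mult.assoc[symmetric] sq_sq)
  then show ?thesis using cancel5 of_nat_zphi_inj by blast
qed

lemma I2: "2 * (-1)^j * int (fib k) = int (fib (j+k)) * int (lucas j) - int (lucas (j+k)) * int (fib j)"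
proof -
  have "sq * of_int (int (fib (j+k)) * int (lucas j) - int (lucas (j+k)) * int (fib j))
      = (sq * of_nat (fib (j+k))) * of_nat (lucas j) - of_nat (lucas (j+k)) * (sq * of_nat (fib j))"
    by (simp add: algebra_simps)
  also have "\<dots> = (al^(j+k)-be^(j+k))*(al^j+be^j) - (al^(j+k)+be^(j+k))*(al^j-be^j)"
    by (simp only: binet_fib binet_lucas)
  also have "\<dots> = 2 * (al^j*be^j) * (al^k - be^k)" by (simp add: algebra_simps power_add)
  also have "\<dots> = 2 * (-1)^j * (sq * of_nat (fib k))" by (simp only: binet_fib albe_pow)
  also have "\<dots> = sq * of_int (2 * (-1)^j * int (fib k))" by (simp add: algebra_simps)
  finally have "sq * (sq * of_int (int (fib (j+k)) * int (lucas j) - int (lucas (j+k)) * int (fib j)))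
     = sq * (sq * of_int (2 * (-1)^j * int (fib k)))"
    by simp
  then have "5 * (of_int (int (fib (j+k)) * int (lucas j) - int (lucas (j+k)) * int (fib j)) :: zphi)
     = 5 * of_int (2 * (-1)^j * int (fib k))"
    by (simp only: mult.assoc[symmetric] sq_sq)
  then show ?thesis using cancel5 of_int_zphi_inj by metis
qed

lemma I3: "int (lucas n)^2 - 5 * int (fib n)^2 = 4 * (-1)^n"
proof -
  have "(of_int (int (lucas n)^2 - 5 * int (fib n)^2) :: zphi)
       = of_nat (lucas n)^2 - (sq * of_nat (fib n))^2"
    by (simp add: power_mult_distrib power2_eq_square sq_sq[symmetric] algebra_simps)
  also have "\<dots> = (al^n+be^n)^2 - (al^n-be^n)^2" by (simp only: binet_fib binet_lucas)
  also have "\<dots> = 4 * (al^n*be^n)" by (simp add: algebra_simps power2_eq_square)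
  also have "\<dots> = of_int (4 * (-1)^n)" by (simp add: albe_pow)
  finally show ?thesis using of_int_zphi_inj by metis
qed



definition xx :: zphi where "xx = -(al^2)"
definition yy :: zphi where "yy = -(be^2)"

lemma neg1sq: "(-1::'a::comm_ring_1)^m * (-1)^m = 1"
  by (simp add: power_mult_distrib[symmetric])

lemma xy1: "xx * yy = 1"
  unfolding xx_def yy_def by (simp add: power_mult_distrib[symmetric] al_be)

lemma xm: "xx^m - 1 = sq * of_nat (fib m) * (-al)^m"
proof -
  have a: "xx^m = (-1)^m * (al^m*al^m)" unfolding xx_def power_minus[of "al^2"]
    by (simp add: power2_eq_square power_mult_distrib)
  have "sq * of_nat (fib m) * (-al)^m = (al^m - be^m)*((-1)^m*al^m)"
    by (simp add: binet_fib power_minus[of al])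
  also have "\<dots> = (-1)^m * (al^m*al^m) - (-1)^m * (al^m*be^m)" by (simp add: algebra_simps)
  also have "\<dots> = xx^m - 1" by (simp add: a albe_pow neg1sq)
  finally show ?thesis by simp
qed

lemma ym: "yy^m - 1 = - (sq * of_nat (fib m) * (-be)^m)"
proof -
  have a: "yy^m = (-1)^m * (be^m*be^m)" unfolding yy_def power_minus[of "be^2"]
    by (simp add: power2_eq_square power_mult_distrib)
  have "- (sq * of_nat (fib m) * (-be)^m) = (be^m - al^m)*((-1)^m*be^m)"
    by (simp add: binet_fib power_minus[of be] algebra_simps)
  also have "\<dots> = (-1)^m * (be^m*be^m) - (-1)^m * (al^m*be^m)" by (simp add: algebra_simps)
  also have "\<dots> = yy^m - 1" by (simp add: a albe_pow neg1sq)
  finally show ?thesis by simp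
qed

lemma negal_be: "(-al)^j * be^j = 1"
proof -
  have "(-al)^j * be^j = ((-al)*be)^j" by (rule power_mult_distrib[symmetric])
  also have "(-al)*be = 1" using al_be by simp
  finally show ?thesis by simp
qed

lemma negbe_al: "(-be)^j * al^j = 1"
proof -
  have "(-be)^j * al^j = ((-be)*al)^j" by (rule power_mult_distrib[symmetric])
  also have "(-be)*al = 1" using al_be by (simp add: mult.commute)
  finally show ?thesis by simp
qed

lemma of_nat_p_dvd_iff: "(of_nat p :: zphi) dvd of_int a \<longleftrightarrow> int p dvd a"
  by (metis of_int_of_nat_eq of_int_dvd_of_int_zphi)
lemma of_int_p_dvd: "int p dvd a \<Longrightarrow> (of_nat p :: zphi) dvd of_int a"
  by (simp add: of_nat_p_dvd_iff)

lemma zphi_part: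
  fixes p n :: nat and h :: int and g :: "nat \<Rightarrow> int"
  assumes p: "prime p" and p5: "p \<ge> 5" and n: "n > 0" and Fn: "p dvd fib n"
    and Fj: "\<And>j. 0<j \<Longrightarrow> j<n \<Longrightarrow> [int (fib j) * g j = 1] (mod int p)"
    and h: "[5*h = 1] (mod int p)"
  shows "\<not> p dvd n \<and> int p dvd (12 * (\<Sum>j=1..n-1. -5*h^2*(g j)^2*(-1)^j) - (int n^2 - 1))"
proof -
  define m where "m = (of_nat p :: zphi)"
  define u where "u j = sq * of_int (h * g j) * be^j" for j
  define v where "v j = - (sq * of_int (h * g j) * al^j)" for j
  have key: "int p dvd (5*h*g j*int (fib j) - 1)" if "0<j" "j<n" for j
  proof -
    have "[5*h*(int (fib j) * g j) = 1*1] (mod int p)" using Fj[OF that] h by (intro cong_mult)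
    then show ?thesis by (simp add: cong_iff_dvd_diff algebra_simps)
  qed
  have uu: "m dvd (u j * (xx^j - 1) - 1)" if "0<j" "j<n" for j
  proof -
    have "u j * (xx^j - 1) = (sq*sq) * of_int (h*g j * int (fib j)) * ((-al)^j * be^j)"
      unfolding u_def xm by (simp add: algebra_simps)
    also have "\<dots> = of_int (5*h*g j*int (fib j))" by (simp add: sq_sq negal_be)
    finally show ?thesis unfolding m_def using of_int_p_dvd[OF key[OF that]] by simp
  qed
  have vv: "m dvd (v j * (yy^j - 1) - 1)" if "0<j" "j<n" for j
  proof -
    have "v j * (yy^j - 1) = (sq*sq) * of_int (h*g j * int (fib j)) * ((-be)^j * al^j)"
      unfolding v_def ym by (simp add: algebra_simps)
    also have "\<dots> = of_int (5*h*g j*int (fib j))" by (simp add: sq_sq negbe_al)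
    finally show ?thesis unfolding m_def using of_int_p_dvd[OF key[OF that]] by simp
  qed
  have uv: "u j * v j = of_int (-5*h^2*(g j)^2*(-1)^j)" for j
  proof -
    have "u j * v j = - (sq*sq) * of_int (h * g j)^2 * (al^j*be^j)"
      unfolding u_def v_def by (simp add: algebra_simps power2_eq_square)
    also have "\<dots> = of_int (-5*h^2*(g j)^2*(-1)^j)" by (simp add: sq_sq albe_pow power_mult_distrib)
    finally show ?thesis .
  qed
  have xn: "m dvd (xx^n - 1)"
  proof -
    have "m dvd of_nat (fib n)" unfolding m_def using of_int_p_dvd[of p "int (fib n)"] Fn by simp
    then show ?thesis unfolding xm by (intro dvd_mult2 dvd_mult)
  qed
  have G: "m dvd (12 * of_nat n^2 * (\<Sum>j=1..n-1. u j * v j) - of_int (int n^2 * (int n^2 - 1)))"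
    by (rule main_generic[OF n xy1 xn _ uu vv]) (use uu in blast)+
  have "12 * of_nat n^2 * (\<Sum>j=1..n-1. u j * v j) - of_int (int n^2 * (int n^2 - 1))
     = (of_int (int n^2 * (12 * (\<Sum>j=1..n-1. -5*h^2*(g j)^2*(-1)^j) - (int n^2 - 1))) :: zphi)"
    unfolding uv by (simp add: algebra_simps of_int_sum)
  then have D: "int p dvd int n^2 * (12 * (\<Sum>j=1..n-1. -5*h^2*(g j)^2*(-1)^j) - (int n^2 - 1))"
    using G unfolding m_def of_nat_p_dvd_iff[symmetric] by metis
  have ndvd: "\<not> p dvd n"
  proof
    assume "p dvd n"
    then obtain k where k: "n = p * k" by blast
    have p2: "p \<ge> 2" using p5 by simp
    have k0': "0 < k" using k n by (cases k) auto
    have "1*k < p*k" using p2 k0' by (intro mult_strict_right_mono) auto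
    then have k0: "0 < k" "k < n" using k0' k by auto
    define z where "z = xx^k"
    have zp: "z^p = xx^n" unfolding z_def k by (simp add: power_mult mult.commute)
    have oddp: "odd p" using p p5 by (intro prime_odd_nat) auto
    have F: "of_nat p dvd ((z + (-1))^p - z^p - (-1)^p)" by (rule fresh[OF p])
    have m1: "(-1::zphi)^p = -1" using oddp by simp
    have eq: "(z + (-1))^p - z^p - (-1)^p = (z - 1)^p - (z^p - 1)" unfolding m1 by simp
    have B: "m dvd ((z-1)^p - (z^p-1))" using F unfolding eq m_def .
    have "m dvd ((z-1)^p - (z^p-1)) + (xx^n - 1)" by (rule dvd_add[OF B xn])
    then have "m dvd (z-1)^p" by (simp add: zp)
    then have A: "m dvd (u k * (z-1))^p" by (simp add: power_mult_distrib)
    have "m dvd ((u k * (z-1))^p - 1^p)" by (rule dvd_pow_sub) (use uu[OF k0] z_def in simp)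
    then have "m dvd ((u k * (z-1))^p - ((u k * (z-1))^p - 1))" unfolding power_one by (rule dvd_diff[OF A])
    then have "m dvd 1" by simp
    then have "int p dvd 1" unfolding m_def using of_nat_p_dvd_iff[of p 1] by simp
    then show False using p2 by simp
  qed
  have "prime (int p)" using p by simp
  moreover have "\<not> int p dvd int n^2"
  proof
    assume "int p dvd int n^2"
    then have "int p dvd int n" using \<open>prime (int p)\<close> prime_dvd_power by blast
    then show False using ndvd by simp
  qed
  ultimately have "int p dvd (12 * (\<Sum>j=1..n-1. -5*h^2*(g j)^2*(-1)^j) - (int n^2 - 1))"
    using D prime_dvd_mult_iff by blast
  then show ?thesis using ndvd by blast
qed



lemma fib_back:
  assumes "[fib (Suc a) = fib (Suc b)] (mod p)" "[fib (Suc (Suc a)) = fib (Suc (Suc b))] (mod p)"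
  shows "[fib a = fib b] (mod p)"
proof -
  have "[fib a + fib (Suc a) = fib b + fib (Suc b)] (mod p)" using assms(2) by (simp add: add.commute)
  moreover have "[fib b + fib (Suc b) = fib b + fib (Suc a)] (mod p)"
    using assms(1) by (intro cong_add cong_refl) (simp add: cong_sym)
  ultimately have "[fib a + fib (Suc a) = fib b + fib (Suc a)] (mod p)" by (rule cong_trans)
  then show ?thesis by (simp add: cong_add_rcancel_nat)
qed

lemma fib_back_iter:
  "[fib i = fib j] (mod p) \<Longrightarrow> [fib (Suc i) = fib (Suc j)] (mod p) \<Longrightarrow> i \<le> j \<Longrightarrow>
   [fib 0 = fib (j - i)] (mod p)"
proof (induction i arbitrary: j)
  case 0 then show ?case by (simp only: diff_zero)
next
  case (Suc i)
  from Suc.prems(3) obtain j' where j: "j = Suc j'" by (cases j) auto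
  have a: "[fib (Suc i) = fib (Suc j')] (mod p)" using Suc.prems(1) unfolding j .
  have b: "[fib (Suc (Suc i)) = fib (Suc (Suc j'))] (mod p)" using Suc.prems(2) unfolding j .
  have c: "[fib i = fib j'] (mod p)" using a b by (rule fib_back)
  have d: "i \<le> j'" using Suc.prems(3) unfolding j by simp
  have "[fib 0 = fib (j' - i)] (mod p)" by (rule Suc.IH[OF c a d])
  then show ?case unfolding j by simp
qed

lemma fib_dvd_exists:
  assumes "p > 0" shows "\<exists>k>0. p dvd fib k"
proof -
  define f where "f k = (fib k mod p, fib (Suc k) mod p)" for k
  have "f ` {0..p*p} \<subseteq> {0..<p} \<times> {0..<p}" using assms unfolding f_def by auto
  then have "card (f ` {0..p*p}) \<le> card ({0..<p} \<times> {0..<p})" by (intro card_mono) auto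
  also have "\<dots> = p * p" by (simp add: card_cartesian_product)
  also have "\<dots> < card {0..p*p}" by simp
  finally have "\<not> inj_on f {0..p*p}" using pigeonhole by blast
  then obtain i j where ij: "i \<in> {0..p*p}" "j \<in> {0..p*p}" "i \<noteq> j" "f i = f j"
    unfolding inj_on_def by blast
  have main: "\<exists>k>0. p dvd fib k" if "i < j" "f i = f j" for i j
  proof -
    have "[fib i = fib j] (mod p)" "[fib (Suc i) = fib (Suc j)] (mod p)"
      using that unfolding f_def cong_def by auto
    then have "[fib 0 = fib (j - i)] (mod p)" using fib_back_iter that by simp
    then have "p dvd fib (j - i)" by (metis cong_0_iff cong_sym fib.simps(1))
    then show ?thesis using that by (intro exI[of _ "j - i"]) auto
  qed
  show ?thesis
  proof (cases "i < j")
    case True then show ?thesis using main ij by blast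
  next
    case False then have "j < i" using ij by simp
    then show ?thesis using main ij by metis
  qed
qed



definition Qp :: "nat \<Rightarrow> rat \<Rightarrow> bool" where
  "Qp p r \<longleftrightarrow> (\<exists>a b. b \<noteq> 0 \<and> coprime b (int p) \<and> int p dvd a \<and> r = of_int a / of_int b)"

lemma Qp_frac: "b \<noteq> 0 \<Longrightarrow> coprime b (int p) \<Longrightarrow> int p dvd a \<Longrightarrow> Qp p (of_int a / of_int b)"
  unfolding Qp_def by blast

lemma Qp_0: "Qp p 0"
  using Qp_frac[of 1 p 0] by simp

lemma Qp_add: assumes "Qp p r" "Qp p s" shows "Qp p (r + s)"
proof -
  obtain a1 b1 where 1: "b1 \<noteq> 0" "coprime b1 (int p)" "int p dvd a1" "r = of_int a1 / of_int b1"
    using assms(1) unfolding Qp_def by blast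
  obtain a2 b2 where 2: "b2 \<noteq> 0" "coprime b2 (int p)" "int p dvd a2" "s = of_int a2 / of_int b2"
    using assms(2) unfolding Qp_def by blast
  have "r + s = of_int (a1*b2 + a2*b1) / of_int (b1*b2)"
    using 1 2 by (simp add: field_simps)
  moreover have "b1*b2 \<noteq> 0" using 1 2 by simp
  moreover have "coprime (b1*b2) (int p)" using 1 2 by simp
  moreover have "int p dvd (a1*b2 + a2*b1)" using 1 2 by simp
  ultimately show ?thesis unfolding Qp_def by blast
qed

lemma Qp_sum: "finite A \<Longrightarrow> (\<And>x. x \<in> A \<Longrightarrow> Qp p (f x)) \<Longrightarrow> Qp p (\<Sum>x\<in>A. f x)"
  by (induction A rule: finite_induct) (auto intro: Qp_add Qp_0)

lemma Qp_final:
  assumes "Qp p r" "int p dvd q"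
  shows "rat_cong_mod (of_int q * r) 0 (int p) (int p ^ 2)"
proof -
  obtain a b where 1: "b \<noteq> 0" "coprime b (int p)" "int p dvd a" "r = of_int a / of_int b"
    using assms(1) unfolding Qp_def by blast
  have "int p ^ 2 dvd q * a" using 1 assms(2) by (simp add: power2_eq_square mult_dvd_mono)
  moreover have "of_int q * r - 0 = of_int (q*a) / of_int b" using 1 by simp
  ultimately show ?thesis unfolding rat_cong_mod_def using 1 by blast
qed

lemma coprime_int_p:
  assumes "prime p" "\<not> p dvd k" shows "coprime (int k) (int p)"
  using assms by (metis coprime_commute coprime_int_iff prime_imp_coprime)



lemma lucas_pos: "lucas n > 0"
  by (induction n rule: lucas.induct) auto

lemma main_ne5:
  fixes p n :: nat
  assumes p: "prime p" and p5: "p \<ge> 5" and pn5: "p \<noteq> 5"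
    and n_def: "n = (LEAST k. k > 0 \<and> p dvd fib k)"
  shows "rat_cong_mod
           (\<Sum>j = 1..n-1. of_nat (lucas j) / of_nat (fib j))
           (of_int (5 * (int n ^ 2 - 1)) / 6 * (of_nat (fib n) / of_nat (lucas n)))
           (int p) (int p ^ 2)"
proof -
  have ex: "\<exists>k. k > 0 \<and> p dvd fib k" using fib_dvd_exists[of p] p5 by simp
  have n: "n > 0" and Fn: "p dvd fib n"
    using LeastI_ex[OF ex] unfolding n_def[symmetric] by auto
  have Fj: "\<not> p dvd fib j" if "0 < j" "j < n" for j
    using not_less_Least[of j "\<lambda>k. k > 0 \<and> p dvd fib k"] that unfolding n_def[symmetric] by auto
  have pint: "prime (int p)" using p by simp
  define F where "F j = int (fib j)" for j
  define L where "L j = int (lucas j)" for j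
  have copF: "coprime (F j) (int p)" if "0 < j" "j < n" for j
    unfolding F_def using coprime_int_p[OF p Fj[OF that]] .
  define g where "g j = (SOME g. [F j * g = 1] (mod int p))" for j
  have gj: "[F j * g j = 1] (mod int p)" if "0 < j" "j < n" for j
    unfolding g_def by (rule someI_ex) (rule cong_solve_coprime_int[OF copF[OF that]])
  have "\<not> p dvd 5"
  proof
    assume "p dvd 5" then have "p \<le> 5" by (rule dvd_imp_le) simp
    then show False using p5 pn5 by simp
  qed
  then have "coprime (int 5) (int p)" by (rule coprime_int_p[OF p])
  then obtain h where h: "[5 * h = 1] (mod int p)" using cong_solve_coprime_int by fastforce
  have LnF: "L n ^ 2 - 5 * F n ^ 2 = 4 * (-1)^n" unfolding L_def F_def by (rule I3)
  have copL: "coprime (L n) (int p)"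
  proof -
    have "\<not> int p dvd L n"
    proof
      assume "int p dvd L n"
      moreover have "int p dvd F n" using Fn unfolding F_def by simp
      ultimately have "int p dvd L n ^ 2 - 5 * F n ^ 2" unfolding power2_eq_square by (intro dvd_diff dvd_mult dvd_mult2)
      then have "int p dvd 4 * (-1)^n * (-1)^n" unfolding LnF by simp
      then have "int p dvd 4" by (simp add: mult.assoc power_mult_distrib[symmetric])
      then have "p dvd 4" using int_dvd_int_iff[of p 4] by simp
      then have "p \<le> 4" by (rule dvd_imp_le) simp
      then show False using p5 by simp
    qed
    then show ?thesis using pint by (metis coprime_commute prime_imp_coprime)
  qed
  have cop6: "coprime (6 :: int) (int p)"
  proof -
    have "\<not> p dvd 2"
    proof
      assume "p dvd 2" then have "p \<le> 2" by (rule dvd_imp_le) simp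
      then show False using p5 by simp
    qed
    have "\<not> p dvd 3"
    proof
      assume "p dvd 3" then have "p \<le> 3" by (rule dvd_imp_le) simp
      then show False using p5 by simp
    qed
    then have "\<not> p dvd 2 * 3" using p \<open>\<not> p dvd 2\<close> prime_dvd_mult_iff by blast
    then have "coprime (int 6) (int p)" by (intro coprime_int_p[OF p]) simp
    then show ?thesis by simp
  qed
  obtain lam where lam: "[L n * lam = 1] (mod int p)" using cong_solve_coprime_int[OF copL] by blast
  have Z: "int p dvd (12 * (\<Sum>j=1..n-1. -5*h^2*(g j)^2*(-1)^j) - (int n^2 - 1))"
    using zphi_part[OF p p5 n Fn _ h, of g] gj unfolding F_def by blast
  define t where "t j = -2*(-1)^j*lam*(g j)^2" for j
  have tj: "int p dvd (1 - t j * F j * F (n-j))" if "0 < j" "j < n" for j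
  proof -
    have "2*(-1)^j*F (n-j) = F (j + (n-j)) * L j - L (j + (n-j)) * F j"
      unfolding F_def L_def by (rule I2)
    then have I: "2*(-1)^j*F (n-j) = F n * L j - L n * F j" using that by simp
    have "t j * F j * F (n-j) = - lam * (g j)^2 * F j * (2*(-1)^j*F (n-j))"
      unfolding t_def by (simp add: algebra_simps)
    also have "\<dots> = (L n * lam) * (F j * g j)^2 - lam * (g j)^2 * F j * L j * F n"
      unfolding I by (simp add: algebra_simps power2_eq_square)
    finally have E: "t j * F j * F (n-j) = (L n * lam) * (F j * g j)^2 - lam * (g j)^2 * F j * L j * F n" .
    have Fn0: "[F n = 0] (mod int p)" using Fn unfolding F_def by (simp add: cong_0_iff)
    have "[(L n * lam) * (F j * g j)^2 - lam * (g j)^2 * F j * L j * F n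
          = 1 * 1^2 - lam * (g j)^2 * F j * L j * 0] (mod int p)"
      by (intro cong_diff cong_mult cong_pow lam gj[OF that] Fn0 cong_refl)
    then have "[t j * F j * F (n-j) = 1] (mod int p)" unfolding E by simp
    then show ?thesis by (simp add: cong_iff_dvd_diff dvd_diff_commute)
  qed
  define Sg where "Sg = (\<Sum>j=1..n-1. (-1)^j * (g j)^2)"
  have sumt: "(\<Sum>j=1..n-1. t j) = -2 * lam * Sg"
    unfolding t_def Sg_def by (simp add: sum_distrib_left algebra_simps)
  have Z': "[-60 * h^2 * Sg = int n^2 - 1] (mod int p)"
  proof -
    have "(\<Sum>j=1..n-1. -5*h^2*(g j)^2*(-1)^j) = -5*h^2*Sg"
      unfolding Sg_def by (simp add: sum_distrib_left algebra_simps)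
    then show ?thesis using Z by (simp add: cong_iff_dvd_diff algebra_simps)
  qed
  have last: "int p dvd (6 * L n * (\<Sum>j=1..n-1. t j) - 5 * (int n^2 - 1))"
  proof -
    have "[5 * (int n^2 - 1) = 5 * (-60 * h^2 * Sg)] (mod int p)"
      using Z' by (intro cong_mult cong_refl) (simp add: cong_sym)
    moreover have "5 * (-60 * h^2 * Sg) = -12 * Sg * (5*h)^2" by (simp add: algebra_simps power2_eq_square)
    moreover have "[-12 * Sg * (5*h)^2 = -12 * Sg * 1^2] (mod int p)"
      by (intro cong_mult cong_pow h cong_refl)
    moreover have "[-12 * Sg * 1 = -12 * Sg * (L n * lam)] (mod int p)"
      using lam by (intro cong_mult cong_refl) (simp add: cong_sym)
    moreover have "-12 * Sg * (L n * lam) = 6 * L n * (\<Sum>j=1..n-1. t j)"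
      unfolding sumt by (simp add: algebra_simps)
    ultimately have "[5 * (int n^2 - 1) = 6 * L n * (\<Sum>j=1..n-1. t j)] (mod int p)"
      by (metis cong_trans power_one mult_1_right)
    then have "[6 * L n * (\<Sum>j=1..n-1. t j) = 5 * (int n^2 - 1)] (mod int p)" by (rule cong_sym)
    then show ?thesis by (simp only: cong_iff_dvd_diff)
  qed
  define S where "S = (\<Sum>j = 1..n-1. of_nat (lucas j) / of_nat (fib j) :: rat)"
  define T where "T = (\<Sum>j = 1..n-1. 1 / (of_int (F j) * of_int (F (n-j))) :: rat)"
  have Fpos: "(of_int (F j) :: rat) \<noteq> 0" if "0 < j" for j
    unfolding F_def using fib_neq_0_nat[OF that] by simp
  have rev: "(\<Sum>j = 1..n-1. f (n - j)) = (\<Sum>j = 1..n-1. f j)" for f :: "nat \<Rightarrow> rat"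
    using sum.atLeastAtMost_rev[of f 1 "n-1"] n by simp
  have pair: "of_nat (lucas j) / of_nat (fib j) + of_nat (lucas (n-j)) / of_nat (fib (n-j))
      = 2 * of_int (F n) * (1 / (of_int (F j) * of_int (F (n-j))) :: rat)" if "j \<in> {1..n-1}" for j
  proof -
    have j: "0 < j" "0 < n - j" using that by auto
    have "lucas j * fib (n-j) + lucas (n-j) * fib j = 2 * fib (j + (n-j))" by (rule I1)
    then have "lucas j * fib (n-j) + lucas (n-j) * fib j = 2 * fib n" using j by simp
    then have e: "(of_nat (lucas j) * of_int (F (n-j)) + of_nat (lucas (n-j)) * of_int (F j) :: rat) = 2 * of_int (F n)"
      unfolding F_def by (metis (mono_tags, lifting) of_int_of_nat_eq of_nat_add of_nat_mult of_nat_numeral)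
    show ?thesis using Fpos[OF j(1)] Fpos[OF j(2)] e unfolding F_def
      by (simp add: field_simps)
  qed
  have "S + S = (\<Sum>j = 1..n-1. of_nat (lucas j) / of_nat (fib j) + of_nat (lucas (n-j)) / of_nat (fib (n-j)))"
    unfolding S_def sum.distrib using rev[of "\<lambda>j. of_nat (lucas j) / of_nat (fib j)"] by simp
  also have "\<dots> = 2 * of_int (F n) * T" unfolding T_def sum_distrib_left by (rule sum.cong[OF refl]) (rule pair)
  finally have ST: "S = of_int (F n) * T" by simp
  define c where "c = 5 * (int n ^ 2 - 1)"
  have QT: "Qp p (T - of_int c / (6 * of_int (L n)))"
  proof -
    have "T - of_int c / (6 * of_int (L n)) =
       (\<Sum>j = 1..n-1. of_int (1 - t j * (F j * F (n-j))) / of_int (F j * F (n-j)))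
       + of_int (6 * L n * (\<Sum>j=1..n-1. t j) - c) / of_int (6 * L n)"
    proof -
      have a: "of_int (1 - t j * (F j * F (n-j))) / of_int (F j * F (n-j)) = 1 / (of_int (F j) * of_int (F (n-j))) - (of_int (t j) :: rat)"
        if "j \<in> {1..n-1}" for j
      proof -
        have j': "0 < j" "0 < n - j" using that by auto
        show ?thesis using Fpos[OF j'(1)] Fpos[OF j'(2)] by (simp add: field_simps)
      qed
      have Ln0: "(of_int (L n) :: rat) \<noteq> 0" unfolding L_def using lucas_pos[of n] by simp
      have b: "of_int (6 * L n * (\<Sum>j=1..n-1. t j) - c) / of_int (6 * L n) = (\<Sum>j=1..n-1. of_int (t j)) - (of_int c / (6 * of_int (L n)) :: rat)"
        using Ln0 by (simp add: field_simps of_int_sum)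
      show ?thesis unfolding T_def using a b by (simp add: sum.cong[OF refl a] sum_subtractf)
    qed
    moreover have "Qp p (\<Sum>j = 1..n-1. of_int (1 - t j * (F j * F (n-j))) / of_int (F j * F (n-j)))"
    proof (rule Qp_sum)
      fix j assume j: "j \<in> {1..n-1}"
      then have j': "0 < j" "j < n" "0 < n - j" "n - j < n" by auto
      show "Qp p (of_int (1 - t j * (F j * F (n-j))) / of_int (F j * F (n-j)))"
        using tj[OF j'(1,2)] copF[OF j'(1,2)] copF[OF j'(3,4)] Fpos[OF j'(1)] Fpos[OF j'(3)]
        by (intro Qp_frac) (auto simp: mult.assoc)
    qed simp
    moreover have "Qp p (of_int (6 * L n * (\<Sum>j=1..n-1. t j) - c) / of_int (6 * L n))"
    proof (rule Qp_frac)
      show "6 * L n \<noteq> 0" unfolding L_def using lucas_pos[of n] by simp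
      show "coprime (6 * L n) (int p)" using cop6 copL by simp
      show "int p dvd 6 * L n * (\<Sum>j=1..n-1. t j) - c" using last unfolding c_def .
    qed
    ultimately show ?thesis by (simp add: Qp_add)
  qed
  have "S - of_int c / 6 * (of_nat (fib n) / of_nat (lucas n)) = of_int (F n) * (T - of_int c / (6 * of_int (L n)))"
    unfolding ST F_def L_def by (simp add: field_simps)
  moreover have "rat_cong_mod (of_int (F n) * (T - of_int c / (6 * of_int (L n)))) 0 (int p) (int p ^ 2)"
    by (rule Qp_final[OF QT]) (use Fn F_def in simp)
  ultimately show ?thesis unfolding S_def[symmetric] c_def[symmetric] rat_cong_mod_def by simp
qed



lemma fib_vals: "fib 3 = 2" "fib 4 = 3" "fib 5 = 5"
  by (simp_all add: numeral_eq_Suc)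
lemma lucas_vals: "lucas 2 = 3" "lucas 3 = 4" "lucas 4 = 7" "lucas 5 = 11"
  by (simp_all add: numeral_eq_Suc)

lemma case5:
  fixes n :: nat
  assumes n_def: "n = (LEAST k. k > 0 \<and> 5 dvd fib k)"
  shows "rat_cong_mod
           (\<Sum>j = 1..n-1. of_nat (lucas j) / of_nat (fib j))
           (of_int (5 * (int n ^ 2 - 1)) / 6 * (of_nat (fib n) / of_nat (lucas n)))
           (int 5) (int 5 ^ 2)"
proof -
  have n5: "n = 5" unfolding n_def
  proof (rule Least_equality)
    show "0 < (5::nat) \<and> 5 dvd fib 5" using fib_vals by simp
  next
    fix k :: nat assume k: "0 < k \<and> 5 dvd fib k"
    show "5 \<le> k"
    proof (rule ccontr)
      assume "\<not> 5 \<le> k"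
      then have "k = 1 \<or> k = 2 \<or> k = 3 \<or> k = 4" using k by auto
      then show False using k fib_vals by auto
    qed
  qed
  have set: "{1..5-1::nat} = {1,2,3,4}" by auto
  have "(\<Sum>j = 1..n-1. of_nat (lucas j) / of_nat (fib j)) -
        (of_int (5 * (int n ^ 2 - 1)) / 6 * (of_nat (fib n) / of_nat (lucas n))) = (of_int (-25) / of_int 33 :: rat)"
    unfolding n5 set using fib_vals lucas_vals by simp
  moreover have "coprime (33::int) (int 5)"
  proof (rule coprimeI)
    fix c assume "c dvd (33::int)" "c dvd int 5"
    then have "c dvd 2 * 33 - 13 * 5" by (intro dvd_diff dvd_mult) simp_all
    then show "is_unit c" by simp
  qed
  ultimately show ?thesis unfolding rat_cong_mod_def
    by (intro exI[of _ "-25"] exI[of _ 33]) simp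
qed


theorem corollary1p2:
  fixes p n :: nat
  assumes "prime p" and "p \<ge> 5"
    and "n = (LEAST k. k > 0 \<and> p dvd fib k)"
  shows "rat_cong_mod
           (\<Sum>j = 1..n-1. of_nat (lucas j) / of_nat (fib j))
           (of_int (5 * (int n ^ 2 - 1)) / 6 * (of_nat (fib n) / of_nat (lucas n)))
           (int p) (int p ^ 2)"
proof (cases "p = 5")
  case True
  then show ?thesis using case5[of n] assms(3) by simp
next
  case False
  show ?thesis by (rule main_ne5[OF assms(1,2) False assms(3)])
qed

end
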